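(* Let $(X_t)_{t\ge1}$ be random variables in $[0,1]$ with average conditional means $(\mu_t)_{t\ge1}$, and let $(\widehat X_t)_{t\ge1}$ be a predictable sequence taking values in $[0,1)$. Fix $\kappa>0$ and $\alpha\in(0,1)$, and set $Z=\Phi(1/\kappa)-\Phi(-1/\kappa)$, $S_t=\sum_{i\le t}X_i$, $U_t=(2\kappa^2)^{-1}+\sum_{i\le t}\psi_E(|X_i-\widehat X_i|)$. Define \[ C_t^{\mathrm{mix}}:=\left\{m\in\mathbb{R}:\ I(S_t-tm;\,U_t)<\frac{\kappa Z\sqrt{2\pi}}{\alpha}\right\}. \] Then $P(\mu_t\in C_t^{\mathrm{mix}}\text{ for all }t\ge1)\ge1-\alpha$. Moreover, if $\mu_t\equiv\mu$ is constant in $t$, then $P(\mu\in\bigcap_{j\le t}C_j^{\mathrm{mix}}\text{ for all }t\ge 1)\ge1-\alpha$.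
   Context: All random variables live on a common probability space. $\mathcal F_t=\sigma(X_1,\dots,X_t)$, and $\mathcal F_0$ is trivial. A sequence $(Y_t)$ is predictable if each $Y_t$ is $\mathcal F_{t-1}$-measurable. The average conditional mean is $\mu_t:=t^{-1}\sum_{j\le t}\mathbb{E}[X_j\mid\mathcal F_{j-1}]$. $\psi_E(x)=-\log(1-x)-x$ for $x\in[0,1)$, and $\psi_E(1):=+\infty$, with the conventions $\exp(-\infty)=0$ and $0\cdot\infty=0$. $\Phi$ is the standard normal CDF. For $y\in\mathbb{R}$ and $v\in[0,\infty]$, $I(y;v):=\int_{-1}^{1}\exp\{y\xi-v\xi^2\}\,d\xi$. *)

theory Defs
  imports "HOL-Probability.Probability"
begin

definition natfilt :: "'a measure \<Rightarrow> (nat \<Rightarrow> 'a \<Rightarrow> real) \<Rightarrow> nat \<Rightarrow> 'a measure" where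
  "natfilt M X t = sigma (space M)
     {X i -` B \<inter> space M | i B. i \<in> {1..t} \<and> B \<in> sets borel}"

definition avg_cond_mean :: "'a measure \<Rightarrow> (nat \<Rightarrow> 'a \<Rightarrow> real) \<Rightarrow> nat \<Rightarrow> 'a \<Rightarrow> real" where
  "avg_cond_mean M X t \<omega> =
     (1 / real t) * (\<Sum>j\<in>{1..t}. real_cond_exp M (natfilt M X (j - 1)) (X j) \<omega>)"

definition psiE :: "real \<Rightarrow> ereal" where
  "psiE x = (if x < 1 then ereal (- ln (1 - x) - x) else \<infinity>)"

text \<open>Integrand exp(y xi - v xi^2) for v in [0,infinity], with exp(-infinity) = 0 and 0*infinity = 0.\<close>
definition Iintegrand :: "real \<Rightarrow> ereal \<Rightarrow> real \<Rightarrow> real" where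
  "Iintegrand y v \<xi> =
     (if v = \<infinity> then (if \<xi> = 0 then 1 else 0)
      else exp (y * \<xi> - real_of_ereal v * \<xi>\<^sup>2))"

definition Iint :: "real \<Rightarrow> ereal \<Rightarrow> real" where
  "Iint y v = (LBINT \<xi>:{-1..1}. Iintegrand y v \<xi>)"

definition Phi :: "real \<Rightarrow> real" where
  "Phi x = measure (density lborel std_normal_density) {..x}"

end

theory Submission
  imports Defs
begin


definition psi :: "real \<Rightarrow> real" where "psi x = - ln (1 - x) - x"

lemma psi_nonneg: "0 \<le> x \<Longrightarrow> x < 1 \<Longrightarrow> 0 \<le> psi x"
  unfolding psi_def using ln_le_minus_one[of "1 - x"] by simp

lemma psi_half: assumes "0 \<le> x" "x < 1" shows "x\<^sup>2 / 2 \<le> psi x"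
proof -
  let ?f = "\<lambda>x. psi x - x\<^sup>2/2"
  have "?f 0 \<le> ?f x"
  proof (rule DERIV_nonneg_imp_increasing_open[OF assms(1)])
    fix y assume y: "0 < y" "y < x"
    have "DERIV ?f y :> (1/(1-y) - 1 - y)"
      unfolding psi_def using y assms
      by (auto intro!: derivative_eq_intros simp: field_simps)
    moreover have "1/(1-y) - 1 - y \<ge> 0"
      using y assms by (simp add: field_simps power2_eq_square)
    ultimately show "\<exists>d. DERIV ?f y :> d \<and> 0 \<le> d" by blast
  next
    show "continuous_on {0..x} ?f" unfolding psi_def using assms
      by (intro continuous_intros) auto
  qed
  then show ?thesis by (simp add: psi_def)
qed

lemma psi_aux: assumes "0 \<le> x" "x < 1" shows "2 * psi x \<le> 1 / (1 - x) - 1 - x"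
proof -
  let ?f = "\<lambda>x. 1 / (1 - x) - 1 - x - 2 * psi x"
  have "?f 0 \<le> ?f x"
  proof (rule DERIV_nonneg_imp_increasing_open[OF assms(1)])
    fix y assume y: "0 < y" "y < x"
    have "DERIV ?f y :> (1 / (1 - y)^2 - 1 - 2 * (1 / (1 - y) - 1))"
      unfolding psi_def using y assms
      apply -
      apply (intro derivative_eq_intros)
      apply (auto simp: power2_eq_square)
      done
    moreover have "1 / (1 - y)^2 - 1 - 2 * (1 / (1 - y) - 1) = (1 - 1/(1-y))^2"
    proof -
      have "\<And>z::real. z \<noteq> 0 \<Longrightarrow> 1/z^2 - 1 - 2*(1/z - 1) = (1 - 1/z)^2"
        by (simp add: field_simps power2_eq_square)
      then show ?thesis using y assms by simp
    qed
    ultimately show "\<exists>d. DERIV ?f y :> d \<and> 0 \<le> d" by (intro exI[of _ "(1 - 1/(1-y))^2"]) auto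
  next
    show "continuous_on {0..x} ?f" unfolding psi_def using assms
      by (intro continuous_intros) auto
  qed
  then show ?thesis by (simp add: psi_def)
qed

lemma psi_ratio: assumes "0 < b" "b \<le> a" "a < 1" shows "psi b / b\<^sup>2 \<le> psi a / a\<^sup>2"
proof -
  let ?f = "\<lambda>x. psi x / x\<^sup>2"
  show ?thesis
  proof (rule DERIV_nonneg_imp_increasing_open[OF assms(2)])
    fix y assume y: "b < y" "y < a"
    have dpsi: "DERIV psi y :> y / (1 - y)"
      unfolding psi_def using y assms
      by (auto intro!: derivative_eq_intros simp: field_simps)
    have dsq: "DERIV (\<lambda>x. x\<^sup>2) y :> 2 * y"
      by (auto intro!: derivative_eq_intros)
    have d: "DERIV ?f y :> ((y / (1 - y)) * y\<^sup>2 - psi y * (2 * y)) / (y\<^sup>2 * y\<^sup>2)"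
      using DERIV_divide[OF dpsi dsq] y assms by simp
    have "2 * psi y \<le> 1 / (1 - y) - 1 - y" using psi_aux[of y] y assms by simp
    also have "1 / (1 - y) - 1 - y = y\<^sup>2 / (1 - y)" using y assms by (simp add: field_simps power2_eq_square)
    finally have "2 * psi y * (1 - y) \<le> y\<^sup>2" using y assms by (simp add: field_simps)
    then have "y * (2 * psi y * (1 - y)) \<le> y * y\<^sup>2" using y assms by (intro mult_left_mono) auto
    then have "0 \<le> (y / (1 - y)) * y\<^sup>2 - psi y * (2 * y)"
      using y assms by (simp add: field_simps power2_eq_square)
    then show "\<exists>d. DERIV ?f y :> d \<and> 0 \<le> d" using d by (intro exI[of _ "((y / (1 - y)) * y\<^sup>2 - psi y * (2 * y)) / (y\<^sup>2 * y\<^sup>2)"]) auto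
  next
    show "continuous_on {b..a} ?f" unfolding psi_def using assms
      by (intro continuous_intros) auto
  qed
qed

lemma ln_lower: assumes "0 \<le> (u::real)" shows "u - u\<^sup>2/2 \<le> ln (1 + u)"
proof -
  let ?f = "\<lambda>u. ln (1 + u) - (u - u\<^sup>2/2)"
  have "?f 0 \<le> ?f u"
  proof (rule DERIV_nonneg_imp_increasing_open[OF assms(1)])
    fix y assume y: "0 < y" "y < u"
    have "DERIV ?f y :> (1/(1+y) - 1 + y)"
      using y by (auto intro!: derivative_eq_intros simp: field_simps)
    moreover have "1/(1+y) - 1 + y \<ge> 0"
      using y by (simp add: field_simps power2_eq_square)
    ultimately show "\<exists>d. DERIV ?f y :> d \<and> 0 \<le> d" by blast
  next
    show "continuous_on {0..u} ?f" using assms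
      by (intro continuous_intros) auto
  qed
  then show ?thesis by simp
qed

lemma fan: assumes "\<bar>\<xi>\<bar> \<le> 1" "\<bar>d\<bar> < 1"
  shows "exp (\<xi> * d - psi \<bar>d\<bar> * \<xi>\<^sup>2) \<le> 1 + \<xi> * d"
proof (cases "d = 0")
  case True then show ?thesis by (simp add: psi_def)
next
  case False
  define a where "a = \<bar>d\<bar>"
  define u where "u = \<xi> * d"
  have a: "0 < a" "a < 1" using False assms by (auto simp: a_def)
  have ua: "\<bar>u\<bar> \<le> a" unfolding u_def a_def using assms
    by (simp add: abs_mult mult_left_le_one_le)
  have xi2: "\<xi>\<^sup>2 = u\<^sup>2 / a\<^sup>2" unfolding u_def a_def using False by (simp add: power_mult_distrib)
  have u1: "1 + u > 0" using ua a by linarith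
  have key: "u - psi a * (u\<^sup>2 / a\<^sup>2) \<le> ln (1 + u)"
  proof (cases "u \<ge> 0")
    case True
    have "a\<^sup>2 / 2 \<le> psi a" using psi_half a by simp
    then have "1/2 \<le> psi a / a\<^sup>2" using a by (simp add: field_simps)
    then have "u\<^sup>2 * (1/2) \<le> u\<^sup>2 * (psi a / a\<^sup>2)"
      by (intro mult_left_mono) auto
    then have "u\<^sup>2 / 2 \<le> psi a * (u\<^sup>2 / a\<^sup>2)" by (simp add: field_simps)
    then show ?thesis using ln_lower[OF True] by linarith
  next
    case False
    define b where "b = - u"
    have b: "0 < b" "b \<le> a" using False ua by (auto simp: b_def)
    have "psi b / b\<^sup>2 \<le> psi a / a\<^sup>2" using psi_ratio b a by simp
    then have F1: "psi b \<le> psi a * (b\<^sup>2 / a\<^sup>2)" using b by (simp add: field_simps)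
    have F2: "ln (1 + u) = - psi b - b" unfolding psi_def b_def by simp
    have F3: "u\<^sup>2 = b\<^sup>2" unfolding b_def by simp
    have F4: "u = - b" unfolding b_def by simp
    have F5: "psi a * (u\<^sup>2 / a\<^sup>2) = psi a * (b\<^sup>2 / a\<^sup>2)" by (simp only: F3)
    show ?thesis using F1 F2 F4 F5 by linarith
  qed
  have arg: "\<xi> * d - psi \<bar>d\<bar> * \<xi>\<^sup>2 = u - psi a * (u\<^sup>2 / a\<^sup>2)"
    unfolding xi2 a_def[symmetric] u_def[symmetric] ..
  have "exp (\<xi> * d - psi \<bar>d\<bar> * \<xi>\<^sup>2) = exp (u - psi a * (u\<^sup>2 / a\<^sup>2))"
    by (simp only: arg)
  also have "\<dots> \<le> exp (ln (1 + u))" using key by simp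
  also have "\<dots> = 1 + u" using u1 by simp
  finally show ?thesis unfolding u_def .
qed




locale setting = prob_space M for M :: "'a measure" +
  fixes X Xhat :: "nat \<Rightarrow> 'a \<Rightarrow> real" and \<kappa> :: real
  assumes X_meas: "\<And>t. t \<ge> 1 \<Longrightarrow> X t \<in> borel_measurable M"
    and X_range: "\<And>t \<omega>. t \<ge> 1 \<Longrightarrow> \<omega> \<in> space M \<Longrightarrow> 0 \<le> X t \<omega> \<and> X t \<omega> \<le> 1"
    and Xhat_pred: "\<And>t. t \<ge> 1 \<Longrightarrow> Xhat t \<in> borel_measurable (natfilt M X (t - 1))"
    and Xhat_range: "\<And>t \<omega>. t \<ge> 1 \<Longrightarrow> \<omega> \<in> space M \<Longrightarrow> 0 \<le> Xhat t \<omega> \<and> Xhat t \<omega> < 1"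
    and kpos: "\<kappa> > 0"
begin

abbreviation "F \<equiv> natfilt M X"

definition "Gen t = {X i -` B \<inter> space M | i B. i \<in> {1..t} \<and> B \<in> sets borel}"

lemma Gen_Pow: "Gen t \<subseteq> Pow (space M)" unfolding Gen_def by auto

lemma space_F[simp]: "space (F t) = space M"
  unfolding natfilt_def using Gen_Pow[of t] by (simp add: Gen_def space_measure_of_conv)

lemma sets_F: "sets (F t) = sigma_sets (space M) (Gen t)"
  unfolding natfilt_def Gen_def[symmetric] using Gen_Pow[of t] by (simp add: sets_measure_of)

lemma Gen_sets: "Gen t \<subseteq> sets M"
  unfolding Gen_def using X_meas by (auto simp: measurable_sets)

lemma sets_F_sub: "sets (F t) \<subseteq> sets M"
  unfolding sets_F by (rule sets.sigma_sets_subset[OF Gen_sets])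

lemma subalg_F: "subalgebra M (F t)"
  unfolding subalgebra_def using sets_F_sub by simp

lemma F_mono: "s \<le> t \<Longrightarrow> sets (F s) \<subseteq> sets (F t)"
  unfolding sets_F by (rule sigma_sets_mono') (fastforce simp: Gen_def)

lemma meas_F_mono: "s \<le> t \<Longrightarrow> f \<in> borel_measurable (F s) \<Longrightarrow> f \<in> borel_measurable (F t)"
  by (rule measurable_from_subalg[of "F t" "F s"]) (auto simp: subalgebra_def F_mono)

lemma meas_F_M: "f \<in> borel_measurable (F s) \<Longrightarrow> f \<in> borel_measurable M"
  by (rule measurable_from_subalg[OF subalg_F])

lemma X_F: assumes "1 \<le> i" "i \<le> t" shows "X i \<in> borel_measurable (F t)"
proof (rule measurableI)
  fix A :: "real set" assume "A \<in> sets borel"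
  then have "X i -` A \<inter> space M \<in> Gen t" using assms unfolding Gen_def by auto
  then show "X i -` A \<inter> space (F t) \<in> sets (F t)" unfolding sets_F by auto
qed auto

lemma sfs: "sigma_finite_subalgebra M (F t)"
proof -
  interpret finite_measure_subalgebra M "F t"
    by unfold_locales (rule subalg_F)
  show ?thesis by unfold_locales
qed

definition "c i = real_cond_exp M (F (i - 1)) (X i)"
definition "cc i \<omega> = max 0 (min 1 (c i \<omega>))"

lemma c_meas: "c i \<in> borel_measurable (F (i - 1))"
  unfolding c_def by (rule borel_measurable_cond_exp)

lemma c_measM: "c i \<in> borel_measurable M"
  using c_meas meas_F_M by blast

lemma cc_meas: "cc i \<in> borel_measurable (F (i - 1))"
  unfolding cc_def using c_meas by measurable

lemma cc_measM: "cc i \<in> borel_measurable M"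
  using cc_meas meas_F_M by blast

lemma cc_range: "0 \<le> cc i \<omega>" "cc i \<omega> \<le> 1"
  unfolding cc_def by auto

lemma X_int: "1 \<le> i \<Longrightarrow> integrable M (X i)"
  by (rule integrable_const_bound[where B=1]) (auto simp: X_range X_meas)

lemma c_range: assumes "1 \<le> i" shows "AE \<omega> in M. 0 \<le> c i \<omega> \<and> c i \<omega> \<le> 1"
proof -
  interpret S: sigma_finite_subalgebra M "F (i - 1)" by (rule sfs)
  have [measurable]: "X i \<in> borel_measurable M" using X_meas assms by auto
  have "AE \<omega> in M. 0 \<le> c i \<omega>"
    unfolding c_def by (rule S.real_cond_exp_pos) (auto intro!: AE_I2 simp: X_range[OF assms])
  moreover have "AE \<omega> in M. c i \<omega> \<le> real_cond_exp M (F (i - 1)) (\<lambda>_. 1) \<omega>"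
    unfolding c_def by (rule S.real_cond_exp_mono) (auto intro!: AE_I2 simp: X_range[OF assms] X_int[OF assms])
  moreover have "AE \<omega> in M. real_cond_exp M (F (i - 1)) (\<lambda>_. 1) \<omega> = 1"
    by (rule S.real_cond_exp_F_meas) auto
  ultimately show ?thesis by eventually_elim auto
qed

lemma cc_eq: assumes "1 \<le> i" shows "AE \<omega> in M. cc i \<omega> = c i \<omega>"
  using c_range[OF assms] by eventually_elim (auto simp: cc_def)

lemma cc_intg:
  assumes i: "1 \<le> i" and h: "h \<in> borel_measurable (F (i - 1))" and hb: "\<And>\<omega>. \<omega> \<in> space M \<Longrightarrow> \<bar>h \<omega>\<bar> \<le> B"
  shows "(\<integral>\<omega>. h \<omega> * cc i \<omega> \<partial>M) = (\<integral>\<omega>. h \<omega> * X i \<omega> \<partial>M)"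
proof -
  interpret S: sigma_finite_subalgebra M "F (i - 1)" by (rule sfs)
  have [measurable]: "X i \<in> borel_measurable M" "h \<in> borel_measurable M" "c i \<in> borel_measurable M" "cc i \<in> borel_measurable M"
    using X_meas i h meas_F_M c_measM cc_measM by auto
  have int: "integrable M (\<lambda>\<omega>. h \<omega> * X i \<omega>)"
  proof (rule integrable_const_bound[where B=B])
    show "AE x in M. norm (h x * X i x) \<le> B"
    proof (rule AE_I2)
      fix x assume x: "x \<in> space M"
      have "\<bar>h x\<bar> * \<bar>X i x\<bar> \<le> B * 1"
        using hb[OF x] X_range[OF i x] by (intro mult_mono) auto
      then show "norm (h x * X i x) \<le> B" by (simp add: abs_mult)
    qed
  qed measurable
  have "(\<integral>\<omega>. h \<omega> * cc i \<omega> \<partial>M) = (\<integral>\<omega>. h \<omega> * c i \<omega> \<partial>M)"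
    by (rule integral_cong_AE) (use cc_eq[OF i] in auto)
  also have "\<dots> = (\<integral>\<omega>. h \<omega> * X i \<omega> \<partial>M)"
    unfolding c_def by (rule S.real_cond_exp_intg(2)[OF int h]) measurable
  finally show ?thesis .
qed

definition "dd i \<omega> = X i \<omega> - Xhat i \<omega>"
definition "ff i \<xi> \<omega> = (if \<bar>dd i \<omega>\<bar> < 1 then exp (\<xi> * (X i \<omega> - cc i \<omega>) - psi \<bar>dd i \<omega>\<bar> * \<xi>\<^sup>2)
                     else if \<xi> = 0 then 1 else 0)"
definition "L t \<xi> \<omega> = (\<Prod>i\<in>{1..t}. ff i \<xi> \<omega>)"
definition "g \<xi> = exp (- \<xi>\<^sup>2 / (2 * \<kappa>\<^sup>2))"
definition "W t \<omega> = (\<integral>\<^sup>+\<xi>. ennreal (indicator {-1..1} \<xi> * g \<xi> * L t \<xi> \<omega>) \<partial>lborel)"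

lemma g_meas[measurable]: "g \<in> borel_measurable borel"
  unfolding g_def by measurable

lemma Xhat_F: assumes "1 \<le> i" "i \<le> s" shows "Xhat i \<in> borel_measurable (F s)"
  using Xhat_pred[OF assms(1)] by (rule meas_F_mono[rotated]) (use assms in auto)

lemma cc_F: assumes "1 \<le> i" "i \<le> s" shows "cc i \<in> borel_measurable (F s)"
  using cc_meas[of i] by (rule meas_F_mono[rotated]) (use assms in auto)

lemma ff_meas: assumes "1 \<le> i" "i \<le> s"
  shows "(\<lambda>(\<omega>, \<xi>). ff i \<xi> \<omega>) \<in> borel_measurable (F s \<Otimes>\<^sub>M lborel)"
proof -
  have [measurable]: "X i \<in> borel_measurable (F s)" "Xhat i \<in> borel_measurable (F s)" "cc i \<in> borel_measurable (F s)"
    using X_F Xhat_F cc_F assms by auto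
  show ?thesis unfolding ff_def dd_def psi_def by measurable
qed

lemma L_meas: assumes "t \<le> s"
  shows "(\<lambda>(\<omega>, \<xi>). L t \<xi> \<omega>) \<in> borel_measurable (F s \<Otimes>\<^sub>M lborel)"
proof -
  have "(\<lambda>x. \<Prod>i\<in>{1..t}. (\<lambda>(\<omega>, \<xi>). ff i \<xi> \<omega>) x) \<in> borel_measurable (F s \<Otimes>\<^sub>M lborel)"
    by (rule borel_measurable_prod) (use ff_meas assms in auto)
  then show ?thesis unfolding L_def by (simp add: case_prod_beta)
qed

lemma W_meas: assumes "t \<le> s" shows "W t \<in> borel_measurable (F s)"
proof -
  have [measurable]: "(\<lambda>(\<omega>, \<xi>). L t \<xi> \<omega>) \<in> borel_measurable (F s \<Otimes>\<^sub>M lborel)"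
    using L_meas[OF assms] .
  show ?thesis unfolding W_def by measurable
qed

lemma ff_nonneg: "0 \<le> ff i \<xi> \<omega>" unfolding ff_def by auto
lemma L_nonneg: "0 \<le> L t \<xi> \<omega>" unfolding L_def by (auto intro!: prod_nonneg ff_nonneg)

lemma dd_range: "1 \<le> i \<Longrightarrow> \<omega> \<in> space M \<Longrightarrow> \<bar>dd i \<omega>\<bar> \<le> 1"
  unfolding dd_def using X_range[of i \<omega>] Xhat_range[of i \<omega>] by auto

lemma ff_le: assumes "\<bar>\<xi>\<bar> \<le> 1" "1 \<le> i" "\<omega> \<in> space M" shows "ff i \<xi> \<omega> \<le> exp 1"
proof (cases "\<bar>dd i \<omega>\<bar> < 1")
  case True
  have "\<xi> * (X i \<omega> - cc i \<omega>) \<le> 1"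
  proof -
    have "\<bar>X i \<omega> - cc i \<omega>\<bar> \<le> 1" using X_range[OF assms(2,3)] cc_range[of i \<omega>] by auto
    then have "\<bar>\<xi>\<bar> * \<bar>X i \<omega> - cc i \<omega>\<bar> \<le> 1 * 1" using assms by (intro mult_mono) auto
    then have "\<bar>\<xi> * (X i \<omega> - cc i \<omega>)\<bar> \<le> 1" by (simp add: abs_mult)
    then show ?thesis by (simp add: abs_le_iff)
  qed
  moreover have "0 \<le> psi \<bar>dd i \<omega>\<bar> * \<xi>\<^sup>2" using psi_nonneg[of "\<bar>dd i \<omega>\<bar>"] True by simp
  ultimately show ?thesis using True unfolding ff_def by simp
qed (auto simp: ff_def)

lemma L_le: assumes "\<bar>\<xi>\<bar> \<le> 1" "\<omega> \<in> space M" shows "L t \<xi> \<omega> \<le> exp 1 ^ t"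
proof -
  have "L t \<xi> \<omega> \<le> (\<Prod>i\<in>{1..t}. exp 1)"
    unfolding L_def by (rule prod_mono) (use ff_le assms ff_nonneg in auto)
  then show ?thesis by simp
qed

lemma L_Suc: "L (Suc s) \<xi> \<omega> = ff (Suc s) \<xi> \<omega> * L s \<xi> \<omega>"
  unfolding L_def by (rule prod.nat_ivl_Suc') simp

lemma ff_fan: assumes "\<bar>\<xi>\<bar> \<le> 1" "1 \<le> i" "\<omega> \<in> space M"
  shows "ff i \<xi> \<omega> \<le> exp (- (\<xi> * (cc i \<omega> - Xhat i \<omega>))) * (1 + \<xi> * dd i \<omega>)"
proof (cases "\<bar>dd i \<omega>\<bar> < 1")
  case True
  have "ff i \<xi> \<omega> = exp (\<xi> * dd i \<omega> - psi \<bar>dd i \<omega>\<bar> * \<xi>\<^sup>2) * exp (- (\<xi> * (cc i \<omega> - Xhat i \<omega>)))"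
    using True unfolding ff_def by (simp add: exp_add[symmetric] dd_def algebra_simps)
  also have "\<dots> \<le> (1 + \<xi> * dd i \<omega>) * exp (- (\<xi> * (cc i \<omega> - Xhat i \<omega>)))"
    by (rule mult_right_mono[OF fan[OF assms(1) True]]) simp
  finally show ?thesis by (simp add: mult.commute)
next
  case False
  have d1: "\<bar>dd i \<omega>\<bar> \<le> 1" using dd_range assms by auto
  have "0 \<le> 1 + \<xi> * dd i \<omega>"
  proof -
    have "\<bar>\<xi> * dd i \<omega>\<bar> \<le> 1 * 1" unfolding abs_mult using assms d1 by (intro mult_mono) auto
    then show ?thesis by (simp add: abs_le_iff)
  qed
  then show ?thesis using False unfolding ff_def by auto
qed

lemma bint: "(f::'a \<Rightarrow> real) \<in> borel_measurable M \<Longrightarrow> (\<And>\<omega>. \<omega> \<in> space M \<Longrightarrow> \<bar>f \<omega>\<bar> \<le> B) \<Longrightarrow> integrable M f"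
  by (rule integrable_const_bound[where B=B]) auto

lemma L_meas1: "t \<le> s \<Longrightarrow> (\<lambda>\<omega>. L t \<xi> \<omega>) \<in> borel_measurable (F s)"
proof -
  assume "t \<le> s"
  note [measurable] = L_meas[OF this]
  show ?thesis by measurable
qed

lemma step_xi: assumes xi: "\<bar>\<xi>\<bar> \<le> 1" and A: "A \<in> sets (F s)"
  shows "(\<integral>\<^sup>+\<omega>. ennreal (indicator A \<omega> * L (Suc s) \<xi> \<omega>) \<partial>M) \<le> (\<integral>\<^sup>+\<omega>. ennreal (indicator A \<omega> * L s \<xi> \<omega>) \<partial>M)"
proof -
  define t where "t = Suc s"
  define H where "H \<omega> = indicator A \<omega> * L s \<xi> \<omega>" for \<omega>
  define y where "y \<omega> = \<xi> * (cc t \<omega> - Xhat t \<omega>)" for \<omega>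
  define k where "k \<omega> = H \<omega> * exp (- y \<omega>)" for \<omega>
  have t1: "1 \<le> t" and ts: "t - 1 = s" by (auto simp: t_def)
  have [measurable]: "A \<in> sets M" using A sets_F_sub by auto
  have mF[measurable]: "(\<lambda>\<omega>. L s \<xi> \<omega>) \<in> borel_measurable (F s)" "cc t \<in> borel_measurable (F s)"
    "Xhat t \<in> borel_measurable (F s)" "X t \<in> borel_measurable M"
    using L_meas1[of s s] cc_meas[of t] Xhat_pred[OF t1] X_meas[OF t1] by (auto simp: t_def)
  have HF[measurable]: "H \<in> borel_measurable (F s)" unfolding H_def using A by measurable
  have kF[measurable]: "k \<in> borel_measurable (F s)" unfolding k_def y_def by measurable
  have kM[measurable]: "k \<in> borel_measurable M" "H \<in> borel_measurable M" using meas_F_M[OF kF] meas_F_M[OF HF] by auto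
  have XhM[measurable]: "Xhat t \<in> borel_measurable M" "cc t \<in> borel_measurable M" using meas_F_M[OF mF(3)] meas_F_M[OF mF(2)] by auto
  have H0: "0 \<le> H \<omega>" for \<omega> unfolding H_def using L_nonneg by auto
  have Hb: "H \<omega> \<le> exp 1 ^ s" if "\<omega> \<in> space M" for \<omega>
    unfolding H_def using L_le[OF xi that, of s] L_nonneg[of s \<xi> \<omega>] by (auto split: split_indicator)
  have yb: "\<bar>y \<omega>\<bar> \<le> 1" if "\<omega> \<in> space M" for \<omega>
  proof -
    have "\<bar>cc t \<omega> - Xhat t \<omega>\<bar> \<le> 1" using cc_range[of t \<omega>] Xhat_range[OF t1 that] by auto
    then have "\<bar>\<xi>\<bar> * \<bar>cc t \<omega> - Xhat t \<omega>\<bar> \<le> 1 * 1" using xi by (intro mult_mono) auto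
    then show ?thesis by (simp add: y_def abs_mult)
  qed
  have eyb: "exp (- y \<omega>) \<le> exp 1" if "\<omega> \<in> space M" for \<omega> using yb[OF that] by simp
  have kb: "\<bar>k \<omega>\<bar> \<le> exp 1 ^ s * exp 1" if "\<omega> \<in> space M" for \<omega>
    unfolding k_def abs_mult using H0[of \<omega>] Hb[OF that] eyb[OF that] by (intro mult_mono) auto
  have Xb: "\<bar>X t \<omega>\<bar> \<le> 1" "\<bar>Xhat t \<omega>\<bar> \<le> 1" "\<bar>cc t \<omega>\<bar> \<le> 1" if "\<omega> \<in> space M" for \<omega>
    using X_range[OF t1 that] Xhat_range[OF t1 that] cc_range[of t \<omega>] by auto
  define B where "B = exp (1::real) ^ s * exp 1"
  have B0: "0 \<le> B" unfolding B_def by simp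
  have kb': "\<bar>k \<omega>\<bar> \<le> B" if "\<omega> \<in> space M" for \<omega> using kb[OF that] by (simp add: B_def)
  have absmul: "\<bar>a * b\<bar> \<le> P * Q" if "\<bar>a\<bar> \<le> P" "\<bar>b\<bar> \<le> Q" for a b P Q :: real
    unfolding abs_mult using that by (intro mult_mono) auto
  have i1: "integrable M (\<lambda>\<omega>. k \<omega> * (1 - \<xi> * Xhat t \<omega>))"
  proof (rule bint[where B="B * 2"])
    fix \<omega> assume w: "\<omega> \<in> space M"
    have "\<bar>\<xi> * Xhat t \<omega>\<bar> \<le> 1 * 1" by (rule absmul) (use xi Xb[OF w] in auto)
    then have "\<bar>1 - \<xi> * Xhat t \<omega>\<bar> \<le> 2" by (auto simp: abs_le_iff)
    then show "\<bar>k \<omega> * (1 - \<xi> * Xhat t \<omega>)\<bar> \<le> B * 2" using absmul kb'[OF w] by blast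
  qed measurable
  have i2: "integrable M (\<lambda>\<omega>. (k \<omega> * \<xi>) * X t \<omega>)"
  proof (rule bint[where B="B * 1 * 1"])
    fix \<omega> assume w: "\<omega> \<in> space M"
    show "\<bar>(k \<omega> * \<xi>) * X t \<omega>\<bar> \<le> B * 1 * 1" using absmul absmul kb'[OF w] xi Xb[OF w] by blast
  qed measurable
  have i3: "integrable M (\<lambda>\<omega>. (k \<omega> * \<xi>) * cc t \<omega>)"
  proof (rule bint[where B="B * 1 * 1"])
    fix \<omega> assume w: "\<omega> \<in> space M"
    show "\<bar>(k \<omega> * \<xi>) * cc t \<omega>\<bar> \<le> B * 1 * 1" using absmul absmul kb'[OF w] xi Xb[OF w] by blast
  qed measurable
  have iH: "integrable M H"
    by (rule bint[where B="exp 1 ^ s"]) (use H0 Hb in auto)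
  have i4: "integrable M (\<lambda>\<omega>. k \<omega> * (1 + \<xi> * dd t \<omega>))"
  proof -
    have "integrable M (\<lambda>\<omega>. k \<omega> * (1 - \<xi> * Xhat t \<omega>) + (k \<omega> * \<xi>) * X t \<omega>)"
      using i1 i2 by auto
    then show ?thesis by (simp add: dd_def algebra_simps)
  qed
  have i5: "integrable M (\<lambda>\<omega>. k \<omega> * (1 + y \<omega>))"
  proof -
    have "integrable M (\<lambda>\<omega>. k \<omega> * (1 - \<xi> * Xhat t \<omega>) + (k \<omega> * \<xi>) * cc t \<omega>)"
      using i1 i3 by auto
    then show ?thesis by (simp add: y_def algebra_simps)
  qed
  have "(\<integral>\<^sup>+\<omega>. ennreal (indicator A \<omega> * L (Suc s) \<xi> \<omega>) \<partial>M)
      \<le> (\<integral>\<^sup>+\<omega>. ennreal (k \<omega> * (1 + \<xi> * dd t \<omega>)) \<partial>M)"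
  proof (rule nn_integral_mono)
    fix \<omega> assume w: "\<omega> \<in> space M"
    have "indicator A \<omega> * L (Suc s) \<xi> \<omega> = H \<omega> * ff t \<xi> \<omega>"
      unfolding H_def t_def L_Suc by simp
    also have "\<dots> \<le> H \<omega> * (exp (- y \<omega>) * (1 + \<xi> * dd t \<omega>))"
      unfolding y_def by (rule mult_left_mono[OF ff_fan[OF xi t1 w] H0])
    finally show "ennreal (indicator A \<omega> * L (Suc s) \<xi> \<omega>) \<le> ennreal (k \<omega> * (1 + \<xi> * dd t \<omega>))"
      by (intro ennreal_leI) (simp add: k_def mult.assoc)
  qed
  also have "\<dots> = ennreal (\<integral>\<omega>. k \<omega> * (1 + \<xi> * dd t \<omega>) \<partial>M)"
  proof (rule nn_integral_eq_integral[OF i4])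
    show "AE x in M. 0 \<le> k x * (1 + \<xi> * dd t x)"
    proof (rule AE_I2)
      fix \<omega> assume w: "\<omega> \<in> space M"
      have "\<bar>\<xi> * dd t \<omega>\<bar> \<le> 1 * 1" by (rule absmul) (use xi dd_range[OF t1 w] in auto)
      then have "0 \<le> 1 + \<xi> * dd t \<omega>" by (auto simp: abs_le_iff)
      moreover have "0 \<le> k \<omega>" unfolding k_def using H0 by simp
      ultimately show "0 \<le> k \<omega> * (1 + \<xi> * dd t \<omega>)" by simp
    qed
  qed
  also have "(\<integral>\<omega>. k \<omega> * (1 + \<xi> * dd t \<omega>) \<partial>M) = (\<integral>\<omega>. k \<omega> * (1 + y \<omega>) \<partial>M)"
  proof -
    have "(\<integral>\<omega>. k \<omega> * (1 + \<xi> * dd t \<omega>) \<partial>M)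
        = (\<integral>\<omega>. k \<omega> * (1 - \<xi> * Xhat t \<omega>) + (k \<omega> * \<xi>) * X t \<omega> \<partial>M)"
      by (rule Bochner_Integration.integral_cong) (auto simp: dd_def algebra_simps)
    also have "\<dots> = (\<integral>\<omega>. k \<omega> * (1 - \<xi> * Xhat t \<omega>) \<partial>M) + (\<integral>\<omega>. (k \<omega> * \<xi>) * X t \<omega> \<partial>M)"
      using i1 i2 by simp
    also have "(\<integral>\<omega>. (k \<omega> * \<xi>) * X t \<omega> \<partial>M) = (\<integral>\<omega>. (k \<omega> * \<xi>) * cc t \<omega> \<partial>M)"
    proof (rule cc_intg[OF t1, symmetric, where B="B * 1"])
      show "(\<lambda>\<omega>. k \<omega> * \<xi>) \<in> borel_measurable (F (t - 1))" unfolding ts by measurable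
      fix \<omega> assume w: "\<omega> \<in> space M"
      show "\<bar>k \<omega> * \<xi>\<bar> \<le> B * 1" using absmul kb'[OF w] xi by blast
    qed
    also have "(\<integral>\<omega>. k \<omega> * (1 - \<xi> * Xhat t \<omega>) \<partial>M) + (\<integral>\<omega>. (k \<omega> * \<xi>) * cc t \<omega> \<partial>M)
        = (\<integral>\<omega>. k \<omega> * (1 - \<xi> * Xhat t \<omega>) + (k \<omega> * \<xi>) * cc t \<omega> \<partial>M)"
      using i1 i3 by simp
    also have "\<dots> = (\<integral>\<omega>. k \<omega> * (1 + y \<omega>) \<partial>M)"
      by (rule Bochner_Integration.integral_cong) (auto simp: y_def algebra_simps)
    finally show ?thesis .
  qed
  also have "(\<integral>\<omega>. k \<omega> * (1 + y \<omega>) \<partial>M) \<le> (\<integral>\<omega>. H \<omega> \<partial>M)"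
  proof (rule integral_mono[OF i5 iH])
    fix \<omega> assume w: "\<omega> \<in> space M"
    have "exp (- y \<omega>) * (1 + y \<omega>) \<le> exp (- y \<omega>) * exp (y \<omega>)"
      by (intro mult_left_mono) (auto simp: exp_ge_add_one_self)
    also have "\<dots> = 1" by (simp add: exp_minus field_simps)
    finally have "exp (- y \<omega>) * (1 + y \<omega>) \<le> 1" .
    then have "H \<omega> * (exp (- y \<omega>) * (1 + y \<omega>)) \<le> H \<omega> * 1" by (rule mult_left_mono) (rule H0)
    then show "k \<omega> * (1 + y \<omega>) \<le> H \<omega>" by (simp add: k_def mult.assoc)
  qed
  then have "ennreal (\<integral>\<omega>. k \<omega> * (1 + y \<omega>) \<partial>M) \<le> ennreal (\<integral>\<omega>. H \<omega> \<partial>M)"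
    by (rule ennreal_leI)
  also have "ennreal (\<integral>\<omega>. H \<omega> \<partial>M) = (\<integral>\<^sup>+\<omega>. ennreal (H \<omega>) \<partial>M)"
    by (rule nn_integral_eq_integral[OF iH, symmetric]) (use H0 in auto)
  finally show ?thesis unfolding H_def .
qed

lemma ff_measM: assumes "1 \<le> i"
  shows "(\<lambda>(\<omega>, \<xi>). ff i \<xi> \<omega>) \<in> borel_measurable (M \<Otimes>\<^sub>M lborel)"
proof -
  have [measurable]: "X i \<in> borel_measurable M" "Xhat i \<in> borel_measurable M" "cc i \<in> borel_measurable M"
    using X_meas[OF assms] meas_F_M[OF Xhat_pred[OF assms]] cc_measM by auto
  show ?thesis unfolding ff_def dd_def psi_def by measurable
qed

lemma L_measM: "(\<lambda>(\<omega>, \<xi>). L t \<xi> \<omega>) \<in> borel_measurable (M \<Otimes>\<^sub>M lborel)"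
proof -
  have "(\<lambda>x. \<Prod>i\<in>{1..t}. (\<lambda>(\<omega>, \<xi>). ff i \<xi> \<omega>) x) \<in> borel_measurable (M \<Otimes>\<^sub>M lborel)"
    by (rule borel_measurable_prod) (use ff_measM in auto)
  then show ?thesis unfolding L_def by (simp add: case_prod_beta)
qed

lemma W_step: assumes A: "A \<in> sets (F s)"
  shows "(\<integral>\<^sup>+\<omega>. indicator A \<omega> * W (Suc s) \<omega> \<partial>M) \<le> (\<integral>\<^sup>+\<omega>. indicator A \<omega> * W s \<omega> \<partial>M)"
proof -
  interpret P: pair_sigma_finite M lborel proof qed
  have AM[measurable]: "A \<in> sets M" using A sets_F_sub by auto
  define G where "G t \<omega> \<xi> = ennreal (indicator A \<omega> * (indicator {-1..1} \<xi> * g \<xi> * L t \<xi> \<omega>))" for t \<omega> \<xi>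
  have Gm: "case_prod (G t) \<in> borel_measurable (M \<Otimes>\<^sub>M lborel)" for t
  proof -
    note [measurable] = L_measM[of t]
    show ?thesis unfolding G_def by measurable
  qed
  have eq: "indicator A \<omega> * W t \<omega> = (\<integral>\<^sup>+\<xi>. G t \<omega> \<xi> \<partial>lborel)" for t \<omega>
    unfolding W_def G_def by (cases "\<omega> \<in> A") auto
  have "(\<integral>\<^sup>+\<omega>. indicator A \<omega> * W (Suc s) \<omega> \<partial>M) = (\<integral>\<^sup>+\<omega>. \<integral>\<^sup>+\<xi>. G (Suc s) \<omega> \<xi> \<partial>lborel \<partial>M)"
    unfolding eq ..
  also have "\<dots> = (\<integral>\<^sup>+\<xi>. \<integral>\<^sup>+\<omega>. G (Suc s) \<omega> \<xi> \<partial>M \<partial>lborel)"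
    by (rule P.Fubini'[symmetric, OF Gm])
  also have "\<dots> \<le> (\<integral>\<^sup>+\<xi>. \<integral>\<^sup>+\<omega>. G s \<omega> \<xi> \<partial>M \<partial>lborel)"
  proof (rule nn_integral_mono)
    fix \<xi> :: real
    show "(\<integral>\<^sup>+\<omega>. G (Suc s) \<omega> \<xi> \<partial>M) \<le> (\<integral>\<^sup>+\<omega>. G s \<omega> \<xi> \<partial>M)"
    proof (cases "\<xi> \<in> {-1..1}")
      case False
      then show ?thesis unfolding G_def by simp
    next
      case True
      have xi: "\<bar>\<xi>\<bar> \<le> 1" using True by auto
      have g0: "0 \<le> g \<xi>" unfolding g_def by simp
      have Gx: "G t \<omega> \<xi> = ennreal (g \<xi>) * ennreal (indicator A \<omega> * L t \<xi> \<omega>)" for t \<omega>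
        unfolding G_def using True g0 L_nonneg[of t \<xi> \<omega>]
        by (simp add: ennreal_mult'[symmetric] mult_ac)
      have mL: "(\<lambda>\<omega>. L t \<xi> \<omega>) \<in> borel_measurable M" for t
        using meas_F_M[OF L_meas1[of t t \<xi>]] by simp
      have "(\<integral>\<^sup>+\<omega>. G (Suc s) \<omega> \<xi> \<partial>M) = ennreal (g \<xi>) * (\<integral>\<^sup>+\<omega>. ennreal (indicator A \<omega> * L (Suc s) \<xi> \<omega>) \<partial>M)"
        unfolding Gx using mL[of "Suc s"] by (intro nn_integral_cmult) measurable
      also have "\<dots> \<le> ennreal (g \<xi>) * (\<integral>\<^sup>+\<omega>. ennreal (indicator A \<omega> * L s \<xi> \<omega>) \<partial>M)"
        by (intro mult_left_mono step_xi[OF xi A]) simp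
      also have "\<dots> = (\<integral>\<^sup>+\<omega>. G s \<omega> \<xi> \<partial>M)"
        unfolding Gx using mL[of s] by (intro nn_integral_cmult[symmetric]) measurable
      finally show ?thesis .
    qed
  qed
  also have "\<dots> = (\<integral>\<^sup>+\<omega>. \<integral>\<^sup>+\<xi>. G s \<omega> \<xi> \<partial>lborel \<partial>M)"
    by (rule P.Fubini'[OF Gm])
  also have "\<dots> = (\<integral>\<^sup>+\<omega>. indicator A \<omega> * W s \<omega> \<partial>M)"
    unfolding eq ..
  finally show ?thesis .
qed

lemma W_measM[measurable]: "W t \<in> borel_measurable M"
  using meas_F_M[OF W_meas[of t t]] by simp

lemma W_iter: assumes "A \<in> sets (F k)" "k \<le> n"
  shows "(\<integral>\<^sup>+\<omega>. indicator A \<omega> * W n \<omega> \<partial>M) \<le> (\<integral>\<^sup>+\<omega>. indicator A \<omega> * W k \<omega> \<partial>M)"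
  using assms(2)
proof (induction n)
  case 0 then show ?case by simp
next
  case (Suc n)
  show ?case
  proof (cases "k = Suc n")
    case False
    then have kn: "k \<le> n" using Suc by simp
    have "A \<in> sets (F n)" using F_mono[OF kn] assms(1) by auto
    then have "(\<integral>\<^sup>+\<omega>. indicator A \<omega> * W (Suc n) \<omega> \<partial>M) \<le> (\<integral>\<^sup>+\<omega>. indicator A \<omega> * W n \<omega> \<partial>M)"
      by (rule W_step)
    also have "\<dots> \<le> (\<integral>\<^sup>+\<omega>. indicator A \<omega> * W k \<omega> \<partial>M)" using Suc.IH[OF kn] .
    finally show ?thesis .
  qed simp
qed

definition "Nc = (\<integral>\<^sup>+\<xi>. ennreal (indicator {-1..1} \<xi> * g \<xi>) \<partial>lborel)"

lemma W0: "W 0 \<omega> = Nc" unfolding W_def Nc_def L_def by simp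

lemma W_bound: "(\<integral>\<^sup>+\<omega>. W n \<omega> \<partial>M) \<le> Nc"
proof -
  have sp: "space M \<in> sets (F 0)" by (metis sets.top space_F)
  have "(\<integral>\<^sup>+\<omega>. W n \<omega> \<partial>M) = (\<integral>\<^sup>+\<omega>. indicator (space M) \<omega> * W n \<omega> \<partial>M)"
    by (rule nn_integral_cong) simp
  also have "\<dots> \<le> (\<integral>\<^sup>+\<omega>. indicator (space M) \<omega> * W 0 \<omega> \<partial>M)"
    by (rule W_iter[OF sp]) simp
  also have "\<dots> = (\<integral>\<^sup>+\<omega>. Nc \<partial>M)"
    by (rule nn_integral_cong) (simp add: W0)
  also have "\<dots> = Nc" using emeasure_space_1 by simp
  finally show ?thesis .
qed

lemma ville_fin: "ennreal r * emeasure M {\<omega> \<in> space M. \<exists>t\<in>{1..n}. ennreal r \<le> W t \<omega>} \<le> Nc"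
proof -
  define A where "A k = {\<omega> \<in> space M. ennreal r \<le> W k \<omega> \<and> (\<forall>j\<in>{1..<k}. W j \<omega> < ennreal r)}" for k
  have AF: "A k \<in> sets (F k)" for k
  proof -
    have [measurable]: "W j \<in> borel_measurable (F k)" if "j \<le> k" for j using W_meas[OF that] .
    have "{\<omega> \<in> space (F k). ennreal r \<le> W k \<omega> \<and> (\<forall>j\<in>{1..<k}. W j \<omega> < ennreal r)} \<in> sets (F k)"
      by measurable
    then show ?thesis unfolding A_def by simp
  qed
  have AM: "A k \<in> sets M" for k using AF sets_F_sub by auto
  have disj: "disjoint_family_on A {1..n}"
    unfolding disjoint_family_on_def A_def
    by (auto simp: not_less) (metis atLeastLessThan_iff linorder_neqE_nat not_le order.trans less_imp_le)
  have U: "{\<omega> \<in> space M. \<exists>t\<in>{1..n}. ennreal r \<le> W t \<omega>} = (\<Union>k\<in>{1..n}. A k)"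
  proof safe
    fix \<omega> t assume w: "\<omega> \<in> space M" and t: "t \<in> {1..n}" "ennreal r \<le> W t \<omega>"
    define k where "k = (LEAST k. k \<in> {1..n} \<and> ennreal r \<le> W k \<omega>)"
    have k: "k \<in> {1..n} \<and> ennreal r \<le> W k \<omega>" unfolding k_def by (rule LeastI[of _ t]) (use t in auto)
    have "\<forall>j\<in>{1..<k}. W j \<omega> < ennreal r"
    proof safe
      fix j assume j: "j \<in> {1..<k}"
      show "W j \<omega> < ennreal r"
      proof (rule ccontr)
        assume "\<not> W j \<omega> < ennreal r"
        then have "j \<in> {1..n} \<and> ennreal r \<le> W j \<omega>" using j k by auto
        then have "k \<le> j" unfolding k_def by (rule Least_le)
        then show False using j by auto
      qed
    qed
    then show "\<omega> \<in> (\<Union>k\<in>{1..n}. A k)" using k w unfolding A_def by auto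
  qed (auto simp: A_def)
  have "ennreal r * emeasure M (\<Union>k\<in>{1..n}. A k) = (\<Sum>k\<in>{1..n}. ennreal r * emeasure M (A k))"
  proof -
    have "(\<Sum>k\<in>{1..n}. emeasure M (A k)) = emeasure M (\<Union>k\<in>{1..n}. A k)"
      by (rule sum_emeasure) (use AM disj in auto)
    then show ?thesis by (metis sum_distrib_left)
  qed
  also have "\<dots> \<le> (\<Sum>k\<in>{1..n}. \<integral>\<^sup>+\<omega>. indicator (A k) \<omega> * W k \<omega> \<partial>M)"
  proof (rule sum_mono)
    fix k assume k: "k \<in> {1..n}"
    have "ennreal r * emeasure M (A k) = (\<integral>\<^sup>+\<omega>. ennreal r * indicator (A k) \<omega> \<partial>M)"
      using AM by (simp add: nn_integral_cmult_indicator)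
    also have "\<dots> \<le> (\<integral>\<^sup>+\<omega>. indicator (A k) \<omega> * W k \<omega> \<partial>M)"
      by (rule nn_integral_mono) (auto simp: A_def split: split_indicator)
    finally show "ennreal r * emeasure M (A k) \<le> (\<integral>\<^sup>+\<omega>. indicator (A k) \<omega> * W k \<omega> \<partial>M)" .
  qed
  also have "\<dots> \<le> Nc"
  proof -
    define R where "R m = {\<omega> \<in> space M. \<forall>j\<in>{1..m}. W j \<omega> < ennreal r}" for m
    have RF: "R m \<in> sets (F m)" for m
    proof -
      have [measurable]: "W j \<in> borel_measurable (F m)" if "j \<le> m" for j using W_meas[OF that] .
      have "{\<omega> \<in> space (F m). \<forall>j\<in>{1..m}. W j \<omega> < ennreal r} \<in> sets (F m)"
        by measurable
      then show ?thesis unfolding R_def by simp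
    qed
    have RM: "R m \<in> sets M" for m using RF sets_F_sub by auto
    have RA1: "A (Suc m) = {\<omega> \<in> R m. ennreal r \<le> W (Suc m) \<omega>}" for m
      unfolding A_def R_def by (auto simp: atLeastLessThanSuc_atLeastAtMost)
    have RA2: "R (Suc m) = {\<omega> \<in> R m. W (Suc m) \<omega> < ennreal r}" for m
      unfolding R_def by (auto simp: le_Suc_eq) (drule bspec[of _ _ "Suc m"], auto)
    have split: "indicator (R m) \<omega> = (indicator (A (Suc m)) \<omega> + indicator (R (Suc m)) \<omega> :: ennreal)" for m \<omega>
      unfolding RA1 RA2 by (auto split: split_indicator simp: not_less)
    have P: "(\<Sum>k\<in>{1..m}. \<integral>\<^sup>+\<omega>. indicator (A k) \<omega> * W k \<omega> \<partial>M) + (\<integral>\<^sup>+\<omega>. indicator (R m) \<omega> * W m \<omega> \<partial>M) \<le> Nc" for m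
    proof (induction m)
      case 0
      have "(\<integral>\<^sup>+\<omega>. indicator (R 0) \<omega> * W 0 \<omega> \<partial>M) = (\<integral>\<^sup>+\<omega>. Nc \<partial>M)"
        by (rule nn_integral_cong) (simp add: W0 R_def)
      also have "\<dots> = Nc" using emeasure_space_1 by simp
      finally show ?case by simp
    next
      case (Suc m)
      have "(\<integral>\<^sup>+\<omega>. indicator (A (Suc m)) \<omega> * W (Suc m) \<omega> \<partial>M) + (\<integral>\<^sup>+\<omega>. indicator (R (Suc m)) \<omega> * W (Suc m) \<omega> \<partial>M)
          = (\<integral>\<^sup>+\<omega>. indicator (A (Suc m)) \<omega> * W (Suc m) \<omega> + indicator (R (Suc m)) \<omega> * W (Suc m) \<omega> \<partial>M)"
        by (rule nn_integral_add[symmetric]) (use AM RM in measurable)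
      also have "\<dots> = (\<integral>\<^sup>+\<omega>. indicator (R m) \<omega> * W (Suc m) \<omega> \<partial>M)"
        by (rule nn_integral_cong) (simp only: split[of m] distrib_right)
      also have "\<dots> \<le> (\<integral>\<^sup>+\<omega>. indicator (R m) \<omega> * W m \<omega> \<partial>M)"
        by (rule W_step[OF RF])
      finally have *: "(\<integral>\<^sup>+\<omega>. indicator (A (Suc m)) \<omega> * W (Suc m) \<omega> \<partial>M) + (\<integral>\<^sup>+\<omega>. indicator (R (Suc m)) \<omega> * W (Suc m) \<omega> \<partial>M)
          \<le> (\<integral>\<^sup>+\<omega>. indicator (R m) \<omega> * W m \<omega> \<partial>M)" .
      have "(\<Sum>k\<in>{1..Suc m}. \<integral>\<^sup>+\<omega>. indicator (A k) \<omega> * W k \<omega> \<partial>M) + (\<integral>\<^sup>+\<omega>. indicator (R (Suc m)) \<omega> * W (Suc m) \<omega> \<partial>M)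
          = (\<Sum>k\<in>{1..m}. \<integral>\<^sup>+\<omega>. indicator (A k) \<omega> * W k \<omega> \<partial>M) +
            ((\<integral>\<^sup>+\<omega>. indicator (A (Suc m)) \<omega> * W (Suc m) \<omega> \<partial>M) + (\<integral>\<^sup>+\<omega>. indicator (R (Suc m)) \<omega> * W (Suc m) \<omega> \<partial>M))"
        by (simp add: add.assoc)
      also have "\<dots> \<le> (\<Sum>k\<in>{1..m}. \<integral>\<^sup>+\<omega>. indicator (A k) \<omega> * W k \<omega> \<partial>M) + (\<integral>\<^sup>+\<omega>. indicator (R m) \<omega> * W m \<omega> \<partial>M)"
        by (rule add_left_mono[OF *])
      also have "\<dots> \<le> Nc" by (rule Suc.IH)
      finally show ?case .
    qed
    show ?thesis by (rule order_trans[OF _ P[of n]]) simp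
  qed
  finally show ?thesis unfolding U .
qed

lemma ville: "ennreal r * emeasure M {\<omega> \<in> space M. \<exists>t\<ge>1. ennreal r \<le> W t \<omega>} \<le> Nc"
proof -
  define B where "B n = {\<omega> \<in> space M. \<exists>t\<in>{1..n}. ennreal r \<le> W t \<omega>}" for n
  have Bs: "range B \<subseteq> sets M"
  proof safe
    fix n
    show "B n \<in> sets M" unfolding B_def by measurable
  qed
  have inc: "incseq B" unfolding incseq_def B_def by force
  have U: "{\<omega> \<in> space M. \<exists>t\<ge>1. ennreal r \<le> W t \<omega>} = (\<Union>n. B n)"
    unfolding B_def by force
  have "ennreal r * emeasure M (\<Union>n. B n) = ennreal r * (SUP n. emeasure M (B n))"
    using SUP_emeasure_incseq[OF Bs inc] by simp
  also have "\<dots> = (SUP n. ennreal r * emeasure M (B n))" by (rule SUP_mult_left_ennreal)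
  also have "\<dots> \<le> Nc" by (rule SUP_least) (use ville_fin in \<open>auto simp: B_def\<close>)
  finally show ?thesis unfolding U .
qed

end



context setting begin

lemma Nc_eq: "Nc = ennreal (\<kappa> * sqrt (2 * pi) * (Phi (1 / \<kappa>) - Phi (- 1 / \<kappa>)))"
proof -
  define D where "D = density lborel std_normal_density"
  interpret D: prob_space D unfolding D_def by (rule prob_space_normal_density) simp
  have k0: "\<kappa> \<noteq> 0" using kpos by simp
  have s0: "sqrt (2 * pi) > 0" by simp
  have Z: "Phi (1 / \<kappa>) - Phi (- 1 / \<kappa>) = measure D {- 1 / \<kappa> <.. 1 / \<kappa>}"
  proof -
    have sub: "{..- 1 / \<kappa>} \<subseteq> {..1 / \<kappa>}" using kpos by (auto simp: field_simps)
    have "{..1 / \<kappa>} - {..- 1 / \<kappa>} = {- 1 / \<kappa> <.. 1 / \<kappa>}" by auto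
    then show ?thesis unfolding Phi_def D_def[symmetric]
      using D.finite_measure_Diff[of "{..1 / \<kappa>}" "{..- 1 / \<kappa>}"] sub unfolding D_def by simp
  qed
  have "emeasure D {- 1 / \<kappa> <.. 1 / \<kappa>} = (\<integral>\<^sup>+ x. std_normal_density x * indicator {- 1 / \<kappa> <.. 1 / \<kappa>} x \<partial>lborel)"
    unfolding D_def by (subst emeasure_density) (auto intro!: nn_integral_cong split: split_indicator)
  also have "\<dots> = (\<integral>\<^sup>+ x. ennreal (1 / sqrt (2 * pi)) * ennreal (indicator {-1..1} (\<kappa> * x) * exp (- (\<kappa> * x)\<^sup>2 / (2 * \<kappa>\<^sup>2))) \<partial>lborel)"
  proof (rule nn_integral_cong_AE)
    show "AE x in lborel. ennreal (std_normal_density x * indicator {- 1 / \<kappa> <.. 1 / \<kappa>} x) =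
        ennreal (1 / sqrt (2 * pi)) * ennreal (indicator {-1..1} (\<kappa> * x) * exp (- (\<kappa> * x)\<^sup>2 / (2 * \<kappa>\<^sup>2)))"
      using AE_lborel_singleton[of "- 1 / \<kappa>"]
    proof eventually_elim
      case (elim x)
      have "indicator {- 1 / \<kappa> <.. 1 / \<kappa>} x = (indicator {-1..1} (\<kappa> * x) :: real)"
        using elim kpos by (auto simp: field_simps split: split_indicator)
      moreover have "exp (- (\<kappa> * x)\<^sup>2 / (2 * \<kappa>\<^sup>2)) = exp (- x\<^sup>2 / 2)"
        using k0 by (simp add: power_mult_distrib)
      ultimately show ?case
        by (simp add: std_normal_density_def ennreal_mult'[symmetric] mult_ac)
    qed
  qed
  also have "\<dots> = ennreal (1 / sqrt (2 * pi)) * (\<integral>\<^sup>+ x. ennreal (indicator {-1..1} (\<kappa> * x) * exp (- (\<kappa> * x)\<^sup>2 / (2 * \<kappa>\<^sup>2))) \<partial>lborel)"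
    by (rule nn_integral_cmult) measurable
  finally have E1: "emeasure D {- 1 / \<kappa> <.. 1 / \<kappa>} = ennreal (1 / sqrt (2 * pi)) * (\<integral>\<^sup>+ x. ennreal (indicator {-1..1} (\<kappa> * x) * exp (- (\<kappa> * x)\<^sup>2 / (2 * \<kappa>\<^sup>2))) \<partial>lborel)" .
  have "Nc = ennreal \<bar>\<kappa>\<bar> * (\<integral>\<^sup>+ x. ennreal (indicator {-1..1} (0 + \<kappa> * x) * g (0 + \<kappa> * x)) \<partial>lborel)"
    unfolding Nc_def by (rule nn_integral_real_affine[OF _ k0]) measurable
  also have "\<dots> = ennreal \<kappa> * (\<integral>\<^sup>+ x. ennreal (indicator {-1..1} (\<kappa> * x) * exp (- (\<kappa> * x)\<^sup>2 / (2 * \<kappa>\<^sup>2))) \<partial>lborel)"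
    using kpos by (simp add: g_def)
  also have "\<dots> = ennreal \<kappa> * (ennreal (sqrt (2 * pi)) * emeasure D {- 1 / \<kappa> <.. 1 / \<kappa>})"
    unfolding E1 using s0 by (simp add: ennreal_mult'[symmetric] mult.assoc[symmetric] ennreal_mult''[symmetric])
  also have "\<dots> = ennreal (\<kappa> * sqrt (2 * pi) * (Phi (1 / \<kappa>) - Phi (- 1 / \<kappa>)))"
    unfolding Z D.emeasure_eq_measure using kpos by (simp add: ennreal_mult'' ennreal_mult mult.assoc)
  finally show ?thesis .
qed

definition "yv t \<omega> = (\<Sum>i\<in>{1..t}. X i \<omega> - cc i \<omega>)"
definition "vv t \<omega> = ereal (1 / (2 * \<kappa>\<^sup>2)) + (\<Sum>i\<in>{1..t}. psiE \<bar>X i \<omega> - Xhat i \<omega>\<bar>)"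

lemma pointwise: "g \<xi> * L t \<xi> \<omega> = Iintegrand (yv t \<omega>) (vv t \<omega>) \<xi>"
proof (cases "\<forall>i\<in>{1..t}. \<bar>dd i \<omega>\<bar> < 1")
  case True
  have ps: "psiE \<bar>X i \<omega> - Xhat i \<omega>\<bar> = ereal (psi \<bar>dd i \<omega>\<bar>)" if "i \<in> {1..t}" for i
    using True that unfolding psiE_def psi_def dd_def by auto
  have v: "vv t \<omega> = ereal (1 / (2 * \<kappa>\<^sup>2) + (\<Sum>i\<in>{1..t}. psi \<bar>dd i \<omega>\<bar>))"
    unfolding vv_def by (simp add: ps sum_ereal)
  have L: "L t \<xi> \<omega> = exp (\<Sum>i\<in>{1..t}. \<xi> * (X i \<omega> - cc i \<omega>) - psi \<bar>dd i \<omega>\<bar> * \<xi>\<^sup>2)"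
    unfolding L_def exp_sum[OF finite_atLeastAtMost] using True by (intro prod.cong) (auto simp: ff_def)
  have "g \<xi> * L t \<xi> \<omega> = exp (- \<xi>\<^sup>2 / (2 * \<kappa>\<^sup>2) + (\<Sum>i\<in>{1..t}. \<xi> * (X i \<omega> - cc i \<omega>) - psi \<bar>dd i \<omega>\<bar> * \<xi>\<^sup>2))"
    unfolding L g_def by (simp only: exp_add)
  also have "- \<xi>\<^sup>2 / (2 * \<kappa>\<^sup>2) + (\<Sum>i\<in>{1..t}. \<xi> * (X i \<omega> - cc i \<omega>) - psi \<bar>dd i \<omega>\<bar> * \<xi>\<^sup>2)
      = yv t \<omega> * \<xi> - (1 / (2 * \<kappa>\<^sup>2) + (\<Sum>i\<in>{1..t}. psi \<bar>dd i \<omega>\<bar>)) * \<xi>\<^sup>2"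
    unfolding yv_def by (simp add: sum_subtractf sum.distrib sum_distrib_left sum_distrib_right algebra_simps)
  finally show ?thesis unfolding Iintegrand_def v by simp
next
  case False
  then obtain j where j: "j \<in> {1..t}" "\<not> \<bar>dd j \<omega>\<bar> < 1" by auto
  have "psiE \<bar>X j \<omega> - Xhat j \<omega>\<bar> = \<infinity>" using j unfolding psiE_def dd_def by auto
  then have "(\<Sum>i\<in>{1..t}. psiE \<bar>X i \<omega> - Xhat i \<omega>\<bar>) = \<infinity>" using j sum_Pinfty by blast
  then have v: "vv t \<omega> = \<infinity>" unfolding vv_def by simp
  show ?thesis
  proof (cases "\<xi> = 0")
    case True
    have "L t \<xi> \<omega> = 1" unfolding L_def by (rule prod.neutral) (auto simp: ff_def True)
    then show ?thesis using True by (simp add: Iintegrand_def v g_def)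
  next
    case False
    have "ff j \<xi> \<omega> = 0" using j False by (simp add: ff_def)
    then have "L t \<xi> \<omega> = 0" unfolding L_def using j by (intro prod_zero) auto
    then show ?thesis using False by (simp add: Iintegrand_def v)
  qed
qed

lemma W_Iint: assumes w: "\<omega> \<in> space M" shows "W t \<omega> = ennreal (Iint (yv t \<omega>) (vv t \<omega>))"
proof -
  have m: "(\<lambda>\<xi>. L t \<xi> \<omega>) \<in> borel_measurable lborel"
  proof -
    note [measurable] = L_measM[of t]
    show ?thesis using w by measurable
  qed
  have int: "integrable lborel (\<lambda>\<xi>. indicator {-1..1} \<xi> * g \<xi> * L t \<xi> \<omega>)"
  proof (rule integrableI_bounded_set[where A="{-1..1}" and B="exp 1 ^ t"])
    show "(\<lambda>\<xi>. indicator {-1..1} \<xi> * g \<xi> * L t \<xi> \<omega>) \<in> borel_measurable lborel"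
      using m by measurable
    show "AE x in lborel. x \<in> {-1..1} \<longrightarrow> norm (indicator {-1..1} x * g x * L t x \<omega>) \<le> exp 1 ^ t"
    proof (rule AE_I2, rule impI)
      fix x :: real assume x: "x \<in> {-1..1}"
      have "g x \<le> 1" unfolding g_def by simp
      moreover have "0 \<le> g x" unfolding g_def by simp
      moreover have "L t x \<omega> \<le> exp 1 ^ t" using L_le[OF _ w, of x t] x by auto
      ultimately have "g x * L t x \<omega> \<le> 1 * exp 1 ^ t" using L_nonneg[of t x \<omega>] by (intro mult_mono) auto
      then show "norm (indicator {-1..1} x * g x * L t x \<omega>) \<le> exp 1 ^ t"
        using x L_nonneg[of t x \<omega>] \<open>0 \<le> g x\<close> by simp
    qed
  qed auto
  have "W t \<omega> = ennreal (\<integral>\<xi>. indicator {-1..1} \<xi> * g \<xi> * L t \<xi> \<omega> \<partial>lborel)"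
    unfolding W_def by (rule nn_integral_eq_integral[OF int]) (auto intro!: AE_I2 mult_nonneg_nonneg L_nonneg simp: g_def)
  also have "(\<integral>\<xi>. indicator {-1..1} \<xi> * g \<xi> * L t \<xi> \<omega> \<partial>lborel) = Iint (yv t \<omega>) (vv t \<omega>)"
    unfolding Iint_def set_lebesgue_integral_def by (simp add: pointwise mult.assoc)
  finally show ?thesis .
qed

end



lemma psiE_meas[measurable]: "psiE \<in> borel_measurable borel"
  unfolding psiE_def by measurable

lemma Iint_meas:
  fixes y :: "'b \<Rightarrow> real" and v :: "'b \<Rightarrow> ereal"
  assumes [measurable]: "y \<in> borel_measurable N" "v \<in> borel_measurable N"
  shows "(\<lambda>\<omega>. Iint (y \<omega>) (v \<omega>)) \<in> borel_measurable N"
proof -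
  have [measurable]: "Measurable.pred N (\<lambda>\<omega>. v \<omega> = \<infinity>)" by measurable
  have "(\<lambda>(\<omega>, \<xi>). indicator {-1..1} \<xi> *\<^sub>R Iintegrand (y \<omega>) (v \<omega>) \<xi>) \<in> borel_measurable (N \<Otimes>\<^sub>M lborel)"
    unfolding Iintegrand_def by measurable
  then have "(\<lambda>\<omega>. \<integral>\<xi>. indicator {-1..1} \<xi> *\<^sub>R Iintegrand (y \<omega>) (v \<omega>) \<xi> \<partial>lborel) \<in> borel_measurable N"
    by (rule lborel.borel_measurable_lebesgue_integral)
  then show ?thesis unfolding Iint_def set_lebesgue_integral_def .
qed

context setting begin

lemma Nc_pos: "Nc > 0"
proof -
  have "ennreal (exp (- 1 / (2 * \<kappa>\<^sup>2))) * emeasure lborel {-1..1::real} = (\<integral>\<^sup>+\<xi>. ennreal (exp (- 1 / (2 * \<kappa>\<^sup>2))) * indicator {-1..1::real} \<xi> \<partial>lborel)"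
    by (subst nn_integral_cmult_indicator) auto
  also have "\<dots> \<le> Nc" unfolding Nc_def
  proof (rule nn_integral_mono)
    fix \<xi> :: real
    show "ennreal (exp (- 1 / (2 * \<kappa>\<^sup>2))) * indicator {-1..1} \<xi> \<le> ennreal (indicator {-1..1} \<xi> * g \<xi>)"
    proof (cases "\<xi> \<in> {-1..1}")
      case True
      then have "\<xi>\<^sup>2 \<le> 1" by (auto simp: abs_le_iff power2_eq_square) (smt (verit) mult_minus_left mult_minus_right mult_le_one)
      then have "\<xi>\<^sup>2 / (2 * \<kappa>\<^sup>2) \<le> 1 / (2 * \<kappa>\<^sup>2)" using kpos by (intro divide_right_mono) auto
      then have "exp (- 1 / (2 * \<kappa>\<^sup>2)) \<le> g \<xi>" unfolding g_def by simp
      then show ?thesis using True by (simp add: ennreal_leI)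
    qed simp
  qed
  finally have "ennreal (exp (- 1 / (2 * \<kappa>\<^sup>2))) * emeasure lborel {-1..1::real} \<le> Nc" .
  moreover have "0 < ennreal (exp (- 1 / (2 * \<kappa>\<^sup>2))) * emeasure lborel {-1..1::real}"
    by (simp add: ennreal_zero_less_mult_iff)
  ultimately show ?thesis by order
qed

end

lemma ennreal_less_realD: "ennreal a < ennreal b \<Longrightarrow> a < b"
  by (meson ennreal_leI not_less)

theorem mainTheorem3:
  fixes M :: "'a measure" and X Xhat :: "nat \<Rightarrow> 'a \<Rightarrow> real"
    and \<kappa> \<alpha> \<mu> :: real
  assumes "prob_space M"
    and X_meas: "\<And>t. t \<ge> 1 \<Longrightarrow> X t \<in> borel_measurable M"
    and X_range: "\<And>t \<omega>. t \<ge> 1 \<Longrightarrow> \<omega> \<in> space M \<Longrightarrow> 0 \<le> X t \<omega> \<and> X t \<omega> \<le> 1"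
    and Xhat_pred: "\<And>t. t \<ge> 1 \<Longrightarrow> Xhat t \<in> borel_measurable (natfilt M X (t - 1))"
    and Xhat_range: "\<And>t \<omega>. t \<ge> 1 \<Longrightarrow> \<omega> \<in> space M \<Longrightarrow> 0 \<le> Xhat t \<omega> \<and> Xhat t \<omega> < 1"
    and "\<kappa> > 0" and "0 < \<alpha>" and "\<alpha> < 1"
  defines "Cmix \<equiv> (\<lambda>t \<omega>. {m :: real.
      Iint ((\<Sum>i\<in>{1..t}. X i \<omega>) - real t * m)
           (ereal (1 / (2 * \<kappa>\<^sup>2)) + (\<Sum>i\<in>{1..t}. psiE \<bar>X i \<omega> - Xhat i \<omega>\<bar>))
      < \<kappa> * (Phi (1 / \<kappa>) - Phi (- 1 / \<kappa>)) * sqrt (2 * pi) / \<alpha>})"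
  shows "measure M {\<omega> \<in> space M. \<forall>t\<ge>1. avg_cond_mean M X t \<omega> \<in> Cmix t \<omega>} \<ge> 1 - \<alpha>
         \<and> ((AE \<omega> in M. \<forall>t\<ge>1. avg_cond_mean M X t \<omega> = \<mu>) \<longrightarrow>
             measure M {\<omega> \<in> space M. \<forall>t\<ge>1. \<mu> \<in> (\<Inter>j\<in>{1..t}. Cmix j \<omega>)} \<ge> 1 - \<alpha>)"
proof -
  interpret S: setting M X Xhat \<kappa>
    by (rule setting.intro[OF assms(1)], unfold_locales) (use assms in auto)
  have kpos: "\<kappa> > 0" and apos: "0 < \<alpha>" and a1: "\<alpha> < 1" using assms by auto
  define Z where "Z = Phi (1 / \<kappa>) - Phi (- 1 / \<kappa>)"
  define Nr where "Nr = \<kappa> * sqrt (2 * pi) * Z"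
  define K where "K = \<kappa> * Z * sqrt (2 * pi) / \<alpha>"
  have NcE: "S.Nc = ennreal Nr" unfolding Nr_def Z_def by (rule S.Nc_eq)
  have Nr_pos: "Nr > 0" using S.Nc_pos unfolding NcE by simp
  have K_eq: "K = Nr / \<alpha>" unfolding K_def Nr_def by (simp add: mult_ac)
  have K_pos: "K > 0" unfolding K_eq using Nr_pos apos by simp
  define f where "f t \<omega> = Iint ((\<Sum>i\<in>{1..t}. X i \<omega>) - real t * avg_cond_mean M X t \<omega>)
           (ereal (1 / (2 * \<kappa>\<^sup>2)) + (\<Sum>i\<in>{1..t}. psiE \<bar>X i \<omega> - Xhat i \<omega>\<bar>))" for t \<omega>
  define f2 where "f2 t \<omega> = Iint ((\<Sum>i\<in>{1..t}. X i \<omega>) - real t * \<mu>)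
           (ereal (1 / (2 * \<kappa>\<^sup>2)) + (\<Sum>i\<in>{1..t}. psiE \<bar>X i \<omega> - Xhat i \<omega>\<bar>))" for t \<omega>
  have Cm: "m \<in> Cmix t \<omega> \<longleftrightarrow> Iint ((\<Sum>i\<in>{1..t}. X i \<omega>) - real t * m)
           (ereal (1 / (2 * \<kappa>\<^sup>2)) + (\<Sum>i\<in>{1..t}. psiE \<bar>X i \<omega> - Xhat i \<omega>\<bar>)) < K" for m t \<omega>
    unfolding Cmix_def K_def Z_def by simp
  have Xm: "(\<lambda>\<omega>. \<Sum>i\<in>{1..t}. X i \<omega>) \<in> borel_measurable M" for t
    by (rule borel_measurable_sum) (use X_meas in auto)
  have Vm: "(\<lambda>\<omega>. ereal (1 / (2 * \<kappa>\<^sup>2)) + (\<Sum>i\<in>{1..t}. psiE \<bar>X i \<omega> - Xhat i \<omega>\<bar>)) \<in> borel_measurable M" for t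
  proof -
    have "(\<lambda>\<omega>. \<Sum>i\<in>{1..t}. psiE \<bar>X i \<omega> - Xhat i \<omega>\<bar>) \<in> borel_measurable M"
    proof (rule borel_measurable_ereal_sum)
      fix i assume "i \<in> {1..t}"
      then have [measurable]: "X i \<in> borel_measurable M" "Xhat i \<in> borel_measurable M"
        using X_meas S.meas_F_M[OF Xhat_pred] by auto
      show "(\<lambda>\<omega>. psiE \<bar>X i \<omega> - Xhat i \<omega>\<bar>) \<in> borel_measurable M" by measurable
    qed
    then show ?thesis by measurable
  qed
  have Am: "avg_cond_mean M X t \<in> borel_measurable M" for t
    unfolding avg_cond_mean_def by measurable
  have fm[measurable]: "f t \<in> borel_measurable M" for t
    unfolding f_def by (rule Iint_meas) (use Xm Vm Am in measurable)
  have f2m[measurable]: "f2 t \<in> borel_measurable M" for t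
    unfolding f2_def by (rule Iint_meas) (use Xm Vm in measurable)
  have mono: "measure M A \<le> measure M B" if "A \<subseteq> B \<union> N" "N \<in> null_sets M" "B \<in> sets M" for A B N
  proof (rule S.finite_measure_mono_AE[OF _ that(3)])
    show "AE x in M. x \<in> A \<longrightarrow> x \<in> B"
      using AE_not_in[OF that(2)] by eventually_elim (use that(1) in auto)
  qed
  define G where "G = {\<omega> \<in> space M. \<forall>t\<ge>1. avg_cond_mean M X t \<omega> \<in> Cmix t \<omega>}"
  have G_eq: "G = {\<omega> \<in> space M. \<forall>t\<ge>1. f t \<omega> < K}" unfolding G_def Cm f_def ..
  have G_sets: "G \<in> sets M" unfolding G_eq by measurable
  define Bad where "Bad = {\<omega> \<in> space M. \<exists>t\<ge>1. ennreal K \<le> S.W t \<omega>}"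
  have Bad_sets: "Bad \<in> sets M" unfolding Bad_def by measurable
  have "ennreal K * emeasure M Bad \<le> ennreal Nr" using S.ville[of K] unfolding Bad_def NcE .
  then have "ennreal (K * measure M Bad) \<le> ennreal Nr"
    using K_pos by (simp add: S.emeasure_eq_measure ennreal_mult)
  then have "K * measure M Bad \<le> Nr" using Nr_pos by (simp add: ennreal_le_iff)
  then have Bad_le: "measure M Bad \<le> \<alpha>" unfolding K_eq using apos Nr_pos by (simp add: field_simps)
  have "AE \<omega> in M. \<forall>i. 1 \<le> i \<longrightarrow> S.cc i \<omega> = S.c i \<omega>"
  proof (rule AE_all_countable[THEN iffD2], rule allI)
    fix i :: nat
    show "AE \<omega> in M. 1 \<le> i \<longrightarrow> S.cc i \<omega> = S.c i \<omega>"
      by (cases "1 \<le> i") (use S.cc_eq in auto)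
  qed
  then obtain N where N: "{\<omega> \<in> space M. \<not> (\<forall>i. 1 \<le> i \<longrightarrow> S.cc i \<omega> = S.c i \<omega>)} \<subseteq> N" "N \<in> null_sets M"
    by (rule AE_E) (blast intro: null_setsI)
  have sub: "space M - Bad \<subseteq> G \<union> N"
  proof
    fix \<omega> assume w: "\<omega> \<in> space M - Bad"
    show "\<omega> \<in> G \<union> N"
    proof (cases "\<omega> \<in> N")
      case False
      then have cc: "S.cc i \<omega> = S.c i \<omega>" if "1 \<le> i" for i using N(1) w that by auto
      have "f t \<omega> < K" if t: "1 \<le> t" for t
      proof -
        have "\<not> ennreal K \<le> S.W t \<omega>" using w t unfolding Bad_def by auto
        then have "ennreal (Iint (S.yv t \<omega>) (S.vv t \<omega>)) < ennreal K"
          using S.W_Iint[of \<omega> t] w by simp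
        then have *: "Iint (S.yv t \<omega>) (S.vv t \<omega>) < K" by (rule ennreal_less_realD)
        have "real t * avg_cond_mean M X t \<omega> = (\<Sum>j\<in>{1..t}. S.c j \<omega>)"
          unfolding avg_cond_mean_def S.c_def using t by simp
        also have "\<dots> = (\<Sum>j\<in>{1..t}. S.cc j \<omega>)" using cc by (intro sum.cong) auto
        finally have "(\<Sum>i\<in>{1..t}. X i \<omega>) - real t * avg_cond_mean M X t \<omega> = S.yv t \<omega>"
          unfolding S.yv_def by (simp add: sum_subtractf)
        then show ?thesis using * unfolding f_def S.vv_def by simp
      qed
      then show ?thesis using w unfolding G_eq by auto
    qed simp
  qed
  have "1 - \<alpha> \<le> measure M (space M - Bad)"
    using S.prob_compl[OF Bad_sets] Bad_le by simp
  also have "\<dots> \<le> measure M G"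
    by (rule mono[OF sub N(2) G_sets])
  finally have part1: "1 - \<alpha> \<le> measure M G" .
  have part2: "1 - \<alpha> \<le> measure M {\<omega> \<in> space M. \<forall>t\<ge>1. \<mu> \<in> (\<Inter>j\<in>{1..t}. Cmix j \<omega>)}"
    if ae: "AE \<omega> in M. \<forall>t\<ge>1. avg_cond_mean M X t \<omega> = \<mu>"
  proof -
    define G2 where "G2 = {\<omega> \<in> space M. \<forall>t\<ge>1. \<mu> \<in> (\<Inter>j\<in>{1..t}. Cmix j \<omega>)}"
    have G2_eq: "G2 = {\<omega> \<in> space M. \<forall>t\<ge>1. \<forall>j\<in>{1..t}. f2 j \<omega> < K}"
      unfolding G2_def f2_def by (auto simp: Cm)
    have G2_sets: "G2 \<in> sets M" unfolding G2_eq by measurable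
    obtain N2 where N2: "{\<omega> \<in> space M. \<not> (\<forall>t\<ge>1. avg_cond_mean M X t \<omega> = \<mu>)} \<subseteq> N2" "N2 \<in> null_sets M"
      using ae by (rule AE_E) (blast intro: null_setsI)
    have "G \<subseteq> G2 \<union> N2"
    proof
      fix \<omega> assume w: "\<omega> \<in> G"
      show "\<omega> \<in> G2 \<union> N2"
      proof (cases "\<omega> \<in> N2")
        case False
        then have eqm: "avg_cond_mean M X t \<omega> = \<mu>" if "1 \<le> t" for t using N2(1) w that unfolding G_def by auto
        have "\<mu> \<in> Cmix j \<omega>" if "1 \<le> j" for j using w that eqm[OF that] unfolding G_def by force
        then show ?thesis using w unfolding G2_def G_def by auto
      qed simp
    qed
    then have "measure M G \<le> measure M G2" by (rule mono[OF _ N2(2) G2_sets])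
    then show ?thesis using part1 unfolding G2_def by simp
  qed
  show ?thesis using part1 part2 unfolding G_def by blast
qed


end
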